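(* Let $N=2M$ and $\mathbf J=\begin{pmatrix}\mathbf 0&\mathbf I\\-\mathbf I&\mathbf 0\end{pmatrix}\in\mathbb{R}^{N\times N}$. Consider the canonical Hamiltonian system $\dot{\mathbf x}=\mathbf J\nabla H(\mathbf x)$ with $H(\mathbf x)=\tfrac12\mathbf x^\intercal\mathbf A\mathbf x+f(\mathbf x)$, where $\mathbf A\in\mathbb{R}^{N\times N}$ is symmetric and $f:\mathbb{R}^N\to\mathbb{R}$ is differentiable. Let $\mathbf X\in\mathbb{R}^{N\times n_s}$ collect snapshots $\mathbf x(t_i)=(\mathbf q(t_i),\mathbf p(t_i))$ of a solution at times $t_i$ with time step $\Delta t$, let $\mathbf X_t$ collect approximations $\mathbf x_t(t_i)$ of $\dot{\mathbf x}(t_i)$, and let $\nabla f(\mathbf X)$ collect the values $\nabla f(\mathbf x(t_i))$. Let $\mathbf U=\operatorname{diag}(\bar{\mathbf U},\bar{\mathbf U})\in\mathbb{R}^{N\times n}$, $n=2m$, be a cotangent lift POD basis, set $\hat{\mathbf J}=\mathbf U^\intercal\mathbf J\mathbf U$, $\hat{\mathbf X}=\mathbf U^\intercal\mathbf X$, $\hat{\mathbf X}_t=\mathbf U^\intercal\mathbf X_t$, $\hat\nabla f(\mathbf X)=\mathbf U^\intercal\nabla f(\mathbf X)$, and let $\hat{\mathbf A}\in\mathbb{R}^{n\times n}$ be the solution of \[\big(\mathbf I\otimes\hat{\mathbf X}\hat{\mathbf X}^\intercal+\hat{\mathbf X}\hat{\mathbf X}^\intercal\otimes\mathbf I\big)\operatorname{vec}\hat{\mathbf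 A}=\operatorname{vec}\big(\hat{\mathbf J}^\intercal\hat{\mathbf X}_t\hat{\mathbf X}^\intercal+\hat{\mathbf X}\hat{\mathbf X}_t^\intercal\hat{\mathbf J}-\hat\nabla f(\mathbf X)\hat{\mathbf X}^\intercal-\hat{\mathbf X}\hat\nabla f(\mathbf X)^\intercal\big).\] Assume: (i) for every $\mathbf x\in\mathbb{R}^N$, $\lim_{n\to N}\|(\mathbf I-\mathbf U\mathbf U^\intercal)\mathbf x\|=0$; (ii) $\lim_{\Delta t\to0}\max_i\|\mathbf x_t(t_i)-\dot{\mathbf x}(t_i)\|=0$; (iii) $\mathbf X$ and $\nabla H(\mathbf X)$ have maximal rank. Then $\hat{\mathbf A}$ converges to the intrusive operator $\bar{\mathbf A}=\mathbf U^\intercal\mathbf A\mathbf U$ as $\Delta t\to0$ and $n\to N$.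
   Context: Cotangent lift basis: writing $\mathbf X=\begin{pmatrix}\mathbf X_q\\\mathbf X_p\end{pmatrix}$ with $\mathbf X_q,\mathbf X_p\in\mathbb{R}^{M\times n_s}$, $\bar{\mathbf U}\in\mathbb{R}^{M\times m}$ consists of the first $m$ left singular vectors of the concatenated matrix $(\mathbf X_q\ \mathbf X_p)\in\mathbb{R}^{M\times 2n_s}$; then $\mathbf U^\intercal\mathbf U=\mathbf I$ and $\hat{\mathbf J}$ is the canonical symplectic matrix of dimension $n$, so $\hat{\mathbf J}^\intercal\hat{\mathbf J}=\mathbf I$. $\otimes$ is the Kronecker product and $\operatorname{vec}$ stacks columns. The linear system above characterizes the minimizer of $\|\hat{\mathbf X}_t-\hat{\mathbf J}(\mathbf M\hat{\mathbf X}+\hat\nabla f(\mathbf X))\|^2$ over symmetric $\mathbf M\in\mathbb{R}^{n\times n}$. *)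

theory Defs
  imports "HOL-Analysis.Analysis"
begin

text \<open>Phase space R^N with N = 2M is indexed by the finite type 'm + 'm:
  Inl a are the q-coordinates, Inr a the p-coordinates.\<close>

definition Jmat :: "real^('m::finite + 'm)^('m + 'm)" where
  "Jmat = (\<chi> i j. case (i, j) of
       (Inl a, Inr b) \<Rightarrow> (if a = b then 1 else 0)
     | (Inr a, Inl b) \<Rightarrow> (if a = b then -1 else 0)
     | _ \<Rightarrow> 0)"

definition blockdiag :: "real^'k^'m \<Rightarrow> real^('k + 'k)^('m + 'm)" where
  "blockdiag Ub = (\<chi> i j. case (i, j) of
       (Inl a, Inl b) \<Rightarrow> Ub $ a $ b
     | (Inr a, Inr b) \<Rightarrow> Ub $ a $ b
     | _ \<Rightarrow> 0)"

definition qpart :: "real^('m + 'm) \<Rightarrow> real^'m" where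
  "qpart x = (\<chi> a. x $ Inl a)"

definition ppart :: "real^('m + 'm) \<Rightarrow> real^'m" where
  "ppart x = (\<chi> a. x $ Inr a)"

definition outer :: "real^'r \<Rightarrow> real^'c \<Rightarrow> real^'c^'r" where
  "outer u v = (\<chi> a b. u $ a * v $ b)"

text \<open>vec stacks the columns: entry (j,i) is X_{ij} (column j, row i),
  pairs ordered lexicographically by the first (column) component.\<close>
definition vecm :: "real^'c^'r \<Rightarrow> real^('c \<times> 'r)" where
  "vecm X = (\<chi> p. X $ snd p $ fst p)"

text \<open>Kronecker product, consistent with vecm: (P \<otimes> Q)_{(a,b),(c,d)} = P_{ac} Q_{bd}\<close>
definition kron :: "real^'c1^'r1 \<Rightarrow> real^'c2^'r2 \<Rightarrow> real^('c1 \<times> 'c2)^('r1 \<times> 'r2)" where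
  "kron P Q = (\<chi> r s. P $ fst r $ fst s * Q $ snd r $ snd s)"

definition tgrid :: "real \<Rightarrow> real \<Rightarrow> nat \<Rightarrow> real" where
  "tgrid t0 dt i = t0 + real i * dt"

definition snap_idx :: "real \<Rightarrow> real \<Rightarrow> nat set" where
  "snap_idx T dt = {..nat \<lfloor>T / dt\<rfloor>}"

text \<open>Cotangent lift POD basis with m = M: Ub consists of (all M) left singular
  vectors of Y = (X_q X_p), i.e. an orthonormal eigenbasis of Y Y^T, where
  S = Y Y^T is passed as argument.\<close>
definition cotangent_lift_full :: "real^'m^'m \<Rightarrow> real^'m^'m \<Rightarrow> bool" where
  "cotangent_lift_full Ub S \<longleftrightarrow> orthogonal_matrix Ub \<and>
     (\<forall>j. \<exists>c. S *v column j Ub = c *\<^sub>R column j Ub)"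

text \<open>Y Y^T for Y = (X_q X_p), snapshots x_i, i \<in> I\<close>
definition snapYYt :: "(nat \<Rightarrow> real^('m + 'm)) \<Rightarrow> nat set \<Rightarrow> real^'m^'m" where
  "snapYYt X I = (\<Sum>i\<in>I. outer (qpart (X i)) (qpart (X i)) + outer (ppart (X i)) (ppart (X i)))"

definition opinf_gram :: "real^'n^'N \<Rightarrow> (nat \<Rightarrow> real^'N) \<Rightarrow> nat set \<Rightarrow> real^'n^'n" where
  "opinf_gram U X I = (\<Sum>i\<in>I. outer (transpose U *v X i) (transpose U *v X i))"

definition opinf_rhs :: "real^'n^'N \<Rightarrow> real^'N^'N \<Rightarrow> (nat \<Rightarrow> real^'N) \<Rightarrow> (nat \<Rightarrow> real^'N)
    \<Rightarrow> (nat \<Rightarrow> real^'N) \<Rightarrow> nat set \<Rightarrow> real^'n^'n" where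
  "opinf_rhs U J X Xt G I =
     (let Jh = transpose U ** J ** U;
          xh = (\<lambda>i. transpose U *v X i);
          xth = (\<lambda>i. transpose U *v Xt i);
          gh = (\<lambda>i. transpose U *v G i)
      in transpose Jh ** (\<Sum>i\<in>I. outer (xth i) (xh i))
         + (\<Sum>i\<in>I. outer (xh i) (xth i)) ** Jh
         - (\<Sum>i\<in>I. outer (gh i) (xh i))
         - (\<Sum>i\<in>I. outer (xh i) (gh i)))"

end

theory Submission
  imports Defs "HOL-Analysis.Analysis"
begin


lemma inner_outer: "inner (D::real^'c^'r) (outer a b) = a \<bullet> (D *v b)"
  by (simp add: inner_vec_def outer_def matrix_vector_mult_def sum_distrib_left mult_ac)

lemma outer_mult_right: "outer a b ** (M::real^_^_) = outer a (transpose M *v b)"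
  by (simp add: vec_eq_iff outer_def matrix_matrix_mult_def matrix_vector_mult_def transpose_def sum_distrib_left mult_ac)

lemma outer_mult_left: "(M::real^_^_) ** outer a b = outer (M *v a) b"
  by (simp add: vec_eq_iff outer_def matrix_matrix_mult_def matrix_vector_mult_def sum_distrib_right sum_distrib_left mult_ac)

lemma sum_mult_right: "(\<Sum>i\<in>I. F i) ** (M::real^_^_) = (\<Sum>i\<in>I. F i ** M)"
  by (simp add: vec_eq_iff matrix_matrix_mult_def sum_component sum_distrib_right sum.swap[where A=I])

lemma sum_mult_left: "(M::real^_^_) ** (\<Sum>i\<in>I. F i) = (\<Sum>i\<in>I. M ** F i)"
  by (simp add: vec_eq_iff matrix_matrix_mult_def sum_component sum_distrib_left sum.swap[where A=I])

lemma transpose_outer: "transpose (outer a b) = outer b (a::real^_)"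
  by (simp add: vec_eq_iff outer_def transpose_def mult_ac)

lemma norm_mv: "norm ((M::real^'c^'r) *v v) \<le> norm M * norm v"
proof -
  have "norm (M *v v)^2 = (M *v v) \<bullet> (M *v v)" by (rule power2_norm_eq_inner)
  also have "\<dots> = (\<Sum>r\<in>UNIV. (M$r \<bullet> v)^2)"
    by (simp only: inner_vec_def matrix_vector_mul_component power2_eq_square inner_real_def)
  also have "\<dots> \<le> (\<Sum>r\<in>UNIV. (norm (M$r))^2 * (norm v)^2)"
  proof (rule sum_mono)
    fix r
    have "\<bar>M$r \<bullet> v\<bar> \<le> norm (M$r) * norm v" by (rule Cauchy_Schwarz_ineq2)
    then have "\<bar>M$r \<bullet> v\<bar>^2 \<le> (norm (M$r) * norm v)^2" by (rule power_mono) simp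
    then show "(M$r \<bullet> v)^2 \<le> (norm (M$r))^2 * (norm v)^2"
      by (simp add: power_mult_distrib)
  qed
  also have "\<dots> = (\<Sum>r\<in>UNIV. (norm (M$r))^2) * (norm v)^2"
    by (simp add: sum_distrib_right)
  also have "(\<Sum>r\<in>UNIV. (norm (M$r))^2) = (norm M)^2"
    unfolding power2_norm_eq_inner inner_vec_def[of M M] by (rule refl)
  finally have "norm (M *v v)^2 \<le> (norm M)^2 * (norm v)^2" .
  then have "norm (M *v v)^2 \<le> (norm M * norm v)^2"
    by (simp only: power_mult_distrib)
  moreover have "0 \<le> norm M * norm v" by simp
  ultimately show ?thesis
    using power2_le_imp_le by blast
qed

lemma orth_norm: "transpose (U::real^'n^'n) ** U = mat 1 \<Longrightarrow> norm (U *v v) = norm v"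
proof -
  assume h: "transpose U ** U = mat 1"
  have "(U *v v) \<bullet> (U *v v) = v \<bullet> v"
    by (metis dot_lmul_matrix h matrix_vector_mul_assoc matrix_vector_mul_lid transpose_matrix_vector vector_transpose_matrix)
  then have "norm (U *v v)^2 = norm v^2" by (simp only: power2_norm_eq_inner)
  then show ?thesis by (rule power2_eq_imp_eq) auto
qed

lemma kron_apply: "(kron P Q *v vecm (X::real^'n^'m)) $ (a,b) = (\<Sum>c\<in>UNIV. \<Sum>d\<in>UNIV. P$a$c * Q$b$d * X$d$c)"
proof -
  have "(kron P Q *v vecm X) $ (a,b) = (\<Sum>q\<in>UNIV. kron P Q $ (a,b) $ q * vecm X $ q)"
    by (simp only: matrix_vector_mult_def vec_lambda_beta)
  also have "\<dots> = (\<Sum>c\<in>UNIV. \<Sum>d\<in>UNIV. kron P Q $ (a,b) $ (c,d) * vecm X $ (c,d))"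
    by (simp add: sum.cartesian_product UNIV_Times_UNIV case_prod_unfold)
  also have "\<dots> = (\<Sum>c\<in>UNIV. \<Sum>d\<in>UNIV. P$a$c * Q$b$d * X$d$c)"
    by (simp add: kron_def vecm_def)
  finally show ?thesis .
qed

lemma kron_id_left: "kron (mat 1) (G::real^'n^'n) *v vecm (X::real^'n^'n) = vecm (G ** X)"
  unfolding vec_eq_iff
proof
  fix p :: "'n \<times> 'n"
  obtain a b where p: "p = (a,b)" by force
  have d4: "\<And>c. (\<Sum>d\<in>UNIV. mat 1 $ a $ c * G $ b $ d * X $ d $ c) = (if a = c then (\<Sum>d\<in>UNIV. G $ b $ d * X $ d $ c) else 0)"
    by (simp add: mat_def)
  show "(kron (mat 1) G *v vecm X) $ p = vecm (G ** X) $ p"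
    by (simp only: p kron_apply d4) (simp add: vecm_def matrix_matrix_mult_def)
qed

lemma kron_id_right: "kron (G::real^'n^'n) (mat 1) *v vecm (X::real^'n^'n) = vecm (X ** transpose G)"
  unfolding vec_eq_iff
proof
  fix p :: "'n \<times> 'n"
  obtain a b where p: "p = (a,b)" by force
  have d4: "\<And>c. (\<Sum>d\<in>UNIV. G $ a $ c * mat 1 $ b $ d * X $ d $ c) = G $ a $ c * X $ b $ c"
    by (simp add: mat_def if_distrib if_distribR cong: if_cong)
  show "(kron G (mat 1) *v vecm X) $ p = vecm (X ** transpose G) $ p"
    by (simp only: p kron_apply d4) (simp add: vecm_def matrix_matrix_mult_def transpose_def mult.commute)
qed

lemma vecm_inj: "vecm X = vecm Y \<Longrightarrow> X = Y"
  by (simp add: vec_eq_iff vecm_def)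



lemma inner_mv_transpose: "(a::real^'r) \<bullet> ((D::real^'c^'r) *v b) = (transpose D *v a) \<bullet> b"
  by (simp add: dot_lmul_matrix[symmetric])

lemma transpose_sum: "transpose (\<Sum>i\<in>I. F i) = (\<Sum>i\<in>I. transpose (F i :: real^'c^'r))"
  by (simp add: vec_eq_iff transpose_def sum_component)

lemma norm_transpose: "norm (transpose (D::real^'c^'r)) = norm D"
proof -
  have "transpose D \<bullet> transpose D = (\<Sum>i\<in>UNIV. \<Sum>j\<in>UNIV. D$j$i * D$j$i)"
    by (simp add: inner_vec_def transpose_def)
  also have "\<dots> = (\<Sum>j\<in>UNIV. \<Sum>i\<in>UNIV. D$j$i * D$j$i)" by (rule sum.swap)
  also have "\<dots> = D \<bullet> D" by (simp add: inner_vec_def)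
  finally have "transpose D \<bullet> transpose D = D \<bullet> D" .
  then show ?thesis unfolding norm_eq_sqrt_inner by (rule arg_cong)
qed

lemma norm_mv_sq: "(norm ((M::real^'c^'r) *v v))^2 = (\<Sum>r\<in>UNIV. (M$r \<bullet> v)^2)"
proof -
  have "norm (M *v v)^2 = (M *v v) \<bullet> (M *v v)" by (rule power2_norm_eq_inner)
  also have "\<dots> = (\<Sum>r\<in>UNIV. (M$r \<bullet> v)^2)"
    by (simp only: inner_vec_def matrix_vector_mul_component power2_eq_square inner_real_def)
  finally show ?thesis .
qed

lemma norm_sq_rows: "(norm (M::real^'c^'r))^2 = (\<Sum>r\<in>UNIV. (norm (M$r))^2)"
  unfolding power2_norm_eq_inner inner_vec_def[of M M] by (rule refl)

lemma pos_rows: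
  fixes U :: "real^'n^'n" and M :: "real^'n^'r" and x :: "nat \<Rightarrow> real^'n"
  assumes U: "transpose U ** U = mat 1"
    and pos: "\<forall>w. lam * (norm w)^2 \<le> (\<Sum>i\<in>I. (w \<bullet> x i)^2)"
  shows "lam * (norm M)^2 \<le> (\<Sum>i\<in>I. (norm (M *v (transpose U *v x i)))^2)"
proof -
  have e1: "(norm (M *v (transpose U *v x i)))^2 = (\<Sum>r\<in>UNIV. ((U *v M$r) \<bullet> x i)^2)" for i
  proof -
    have "(norm (M *v (transpose U *v x i)))^2 = (\<Sum>r\<in>UNIV. (M$r \<bullet> (transpose U *v x i))^2)"
      by (rule norm_mv_sq)
    also have "\<dots> = (\<Sum>r\<in>UNIV. ((U *v M$r) \<bullet> x i)^2)"
      by (simp only: inner_mv_transpose transpose_transpose)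
    finally show ?thesis .
  qed
  have "lam * (norm M)^2 = (\<Sum>r\<in>UNIV. lam * (norm (U *v M$r))^2)"
    unfolding orth_norm[OF U] sum_distrib_left[symmetric] by (simp only: norm_sq_rows)
  also have "\<dots> \<le> (\<Sum>r\<in>UNIV. \<Sum>i\<in>I. ((U *v M$r) \<bullet> x i)^2)"
    by (rule sum_mono) (use pos in blast)
  also have "\<dots> = (\<Sum>i\<in>I. (norm (M *v (transpose U *v x i)))^2)"
    by (simp only: e1) (rule sum.swap)
  finally show ?thesis .
qed



lemma transpose_add: "transpose (P + Q) = transpose P + transpose (Q::real^'c^'r)"
  by (simp add: vec_eq_iff transpose_def)

lemma lyap_bound:
  fixes U J A Ah :: "real^'n^'n" and x xt g :: "nat \<Rightarrow> real^'n"
  assumes U1: "transpose U ** U = mat 1" and U2: "U ** transpose U = mat 1"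
    and J1: "transpose J ** J = mat 1" and J2: "J ** transpose J = mat 1"
    and Asym: "transpose A = A"
    and fin: "finite I"
    and eq: "opinf_gram U x I ** Ah + Ah ** opinf_gram U x I = opinf_rhs U J x xt g I"
    and err: "\<forall>i\<in>I. norm (xt i - J *v (A *v x i + g i)) \<le> eps"
    and bnd: "\<forall>i\<in>I. norm (x i) \<le> B"
    and pos: "\<forall>w. lam * (norm w)^2 \<le> (\<Sum>i\<in>I. (w \<bullet> x i)^2)"
    and lam: "lam > 0" and eps: "eps \<ge> 0" and B: "B \<ge> 0"
  shows "norm (Ah - transpose U ** A ** U) \<le> real (card I) * eps * B / lam"
proof -
  define Ab where "Ab = transpose U ** A ** U"
  define D where "D = Ah - Ab"
  define Jh where "Jh = transpose U ** J ** U"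
  define h where "h = (\<lambda>i. transpose U *v x i)"
  define th where "th = (\<lambda>i. transpose U *v xt i)"
  define gh where "gh = (\<lambda>i. transpose U *v g i)"
  define ep where "ep = (\<lambda>i. transpose U *v (xt i - J *v (A *v x i + g i)))"
  define Je where "Je = (\<lambda>i. transpose Jh *v ep i)"
  have Absym: "transpose Ab = Ab"
    by (simp only: Ab_def matrix_transpose_mul Asym matrix_mul_assoc transpose_transpose)
  have UUt: "U *v (transpose U *v v) = v" for v
    by (simp only: matrix_vector_mul_assoc U2 matrix_vector_mul_lid)
  have UtU: "transpose U *v (U *v v) = v" for v
    by (simp only: matrix_vector_mul_assoc U1 matrix_vector_mul_lid)
  have JtJ: "transpose J *v (J *v v) = v" for v
    by (simp only: matrix_vector_mul_assoc J1 matrix_vector_mul_lid)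
  have Abv: "Ab *v v = transpose U *v (A *v (U *v v))" for v
    by (simp only: Ab_def matrix_vector_mul_assoc matrix_mul_assoc)
  have tJ: "transpose Jh *v v = transpose U *v (transpose J *v (U *v v))" for v
    by (simp only: Jh_def matrix_transpose_mul transpose_transpose matrix_vector_mul_assoc matrix_mul_assoc)
  have key: "transpose Jh *v th i = Ab *v h i + gh i + Je i" for i
  proof -
    have "th i = transpose U *v (J *v (A *v x i + g i)) + ep i"
      by (simp only: th_def ep_def matrix_vector_mult_diff_distrib) simp
    then have "transpose Jh *v th i = transpose Jh *v (transpose U *v (J *v (A *v x i + g i))) + Je i"
      by (simp only: Je_def matrix_vector_right_distrib)
    also have "transpose Jh *v (transpose U *v (J *v (A *v x i + g i))) = transpose U *v (A *v x i + g i)"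
      by (simp only: tJ UUt JtJ)
    also have "\<dots> = Ab *v h i + gh i"
      by (simp only: Abv h_def gh_def UUt matrix_vector_right_distrib)
    finally show ?thesis .
  qed
  have nJe: "norm (Je i) \<le> eps" if "i \<in> I" for i
  proof -
    have o1: "transpose (transpose U) ** transpose U = mat 1" using U2 by simp
    have o2: "transpose (transpose J) ** transpose J = mat 1" using J2 by simp
    have "norm (Je i) = norm (xt i - J *v (A *v x i + g i))"
      by (simp only: Je_def tJ ep_def orth_norm[OF o1] orth_norm[OF o2] orth_norm[OF U1])
    then show ?thesis using err that by simp
  qed
  have nh: "norm (h i) \<le> B" if "i \<in> I" for i
  proof -
    have o1: "transpose (transpose U) ** transpose U = mat 1" using U2 by simp
    have "norm (h i) = norm (x i)" by (simp only: h_def orth_norm[OF o1])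
    then show ?thesis using bnd that by simp
  qed
  have G: "opinf_gram U x I = (\<Sum>i\<in>I. outer (h i) (h i))"
    by (simp only: opinf_gram_def h_def)
  have R: "opinf_rhs U J x xt g I = transpose Jh ** (\<Sum>i\<in>I. outer (th i) (h i))
         + (\<Sum>i\<in>I. outer (h i) (th i)) ** Jh
         - (\<Sum>i\<in>I. outer (gh i) (h i))
         - (\<Sum>i\<in>I. outer (h i) (gh i))"
    by (simp only: opinf_rhs_def Let_def Jh_def h_def th_def gh_def)
  have iR: "inner D (opinf_rhs U J x xt g I) = (\<Sum>i\<in>I. (transpose Jh *v th i) \<bullet> (D *v h i)
      + h i \<bullet> (D *v (transpose Jh *v th i)) - gh i \<bullet> (D *v h i) - h i \<bullet> (D *v gh i))"
    unfolding R
    by (simp only: inner_add_right inner_diff_right sum_mult_left sum_mult_right outer_mult_left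
        outer_mult_right transpose_transpose inner_sum_right inner_outer sum.distrib sum_subtractf)
  have iL: "inner D (opinf_gram U x I ** Ah + Ah ** opinf_gram U x I) =
      (\<Sum>i\<in>I. h i \<bullet> (D *v (transpose Ah *v h i)) + (Ah *v h i) \<bullet> (D *v h i))"
    unfolding G
    by (simp only: inner_add_right sum_mult_left sum_mult_right outer_mult_left
        outer_mult_right inner_sum_right inner_outer sum.distrib)
  have Ah: "Ah = D + Ab" by (simp add: D_def)
  have perL: "h i \<bullet> (D *v (transpose Ah *v h i)) + (Ah *v h i) \<bullet> (D *v h i)
     = ((norm (transpose D *v h i))^2 + (norm (D *v h i))^2) + (h i \<bullet> (D *v (Ab *v h i)) + (Ab *v h i) \<bullet> (D *v h i))" for i
  proof -
    have "h i \<bullet> (D *v (transpose D *v h i)) = (norm (transpose D *v h i))^2"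
      by (simp only: inner_mv_transpose power2_norm_eq_inner)
    moreover have "(D *v h i) \<bullet> (D *v h i) = (norm (D *v h i))^2"
      by (simp only: power2_norm_eq_inner)
    ultimately show ?thesis
      unfolding Ah transpose_add Absym
      by (simp only: matrix_vector_mult_add_rdistrib matrix_vector_right_distrib inner_add_left inner_add_right)
  qed
  have perR: "(transpose Jh *v th i) \<bullet> (D *v h i)
      + h i \<bullet> (D *v (transpose Jh *v th i)) - gh i \<bullet> (D *v h i) - h i \<bullet> (D *v gh i)
     = (Je i \<bullet> (D *v h i) + h i \<bullet> (D *v Je i)) + (h i \<bullet> (D *v (Ab *v h i)) + (Ab *v h i) \<bullet> (D *v h i))" for i
    unfolding key
    by (simp only: matrix_vector_right_distrib inner_add_left inner_add_right)
  have main: "(\<Sum>i\<in>I. (norm (transpose D *v h i))^2 + (norm (D *v h i))^2)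
      = (\<Sum>i\<in>I. Je i \<bullet> (D *v h i) + h i \<bullet> (D *v Je i))"
  proof -
    have "inner D (opinf_gram U x I ** Ah + Ah ** opinf_gram U x I) = inner D (opinf_rhs U J x xt g I)"
      using eq by simp
    then have "(\<Sum>i\<in>I. ((norm (transpose D *v h i))^2 + (norm (D *v h i))^2) + (h i \<bullet> (D *v (Ab *v h i)) + (Ab *v h i) \<bullet> (D *v h i)))
       = (\<Sum>i\<in>I. (Je i \<bullet> (D *v h i) + h i \<bullet> (D *v Je i)) + (h i \<bullet> (D *v (Ab *v h i)) + (Ab *v h i) \<bullet> (D *v h i)))"
      unfolding iL iR perL perR .
    then show ?thesis by (simp only: sum.distrib)
  qed
  have low: "2 * lam * (norm D)^2 \<le> (\<Sum>i\<in>I. (norm (transpose D *v h i))^2 + (norm (D *v h i))^2)"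
  proof -
    have "lam * (norm (transpose D))^2 \<le> (\<Sum>i\<in>I. (norm (transpose D *v h i))^2)"
      unfolding h_def by (rule pos_rows[OF U1 pos])
    moreover have "lam * (norm D)^2 \<le> (\<Sum>i\<in>I. (norm (D *v h i))^2)"
      unfolding h_def by (rule pos_rows[OF U1 pos])
    ultimately show ?thesis by (simp add: norm_transpose sum.distrib)
  qed
  have up: "(\<Sum>i\<in>I. Je i \<bullet> (D *v h i) + h i \<bullet> (D *v Je i)) \<le> real (card I) * (2 * eps * B * norm D)"
  proof -
    have "Je i \<bullet> (D *v h i) + h i \<bullet> (D *v Je i) \<le> 2 * eps * B * norm D" if i: "i \<in> I" for i
    proof -
      have a: "Je i \<bullet> (D *v h i) \<le> norm (Je i) * (norm D * norm (h i))"
        by (rule order_trans[OF norm_cauchy_schwarz]) (intro mult_left_mono norm_mv norm_ge_zero)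
      have b: "h i \<bullet> (D *v Je i) \<le> norm (h i) * (norm D * norm (Je i))"
        by (rule order_trans[OF norm_cauchy_schwarz]) (intro mult_left_mono norm_mv norm_ge_zero)
      have c: "norm (Je i) * (norm D * norm (h i)) \<le> eps * (norm D * B)"
        using nJe[OF i] nh[OF i] eps by (intro mult_mono) (auto intro: mult_left_mono)
      have d: "norm (h i) * (norm D * norm (Je i)) \<le> B * (norm D * eps)"
        using nJe[OF i] nh[OF i] B by (intro mult_mono) (auto intro: mult_left_mono)
      show ?thesis using a b c d by (simp add: algebra_simps)
    qed
    then have "(\<Sum>i\<in>I. Je i \<bullet> (D *v h i) + h i \<bullet> (D *v Je i)) \<le> (\<Sum>i\<in>I. 2 * eps * B * norm D)"
      by (rule sum_mono)
    then show ?thesis by simp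
  qed
  have fin2: "lam * (norm D)^2 \<le> real (card I) * eps * B * norm D"
    using low main up by (simp add: algebra_simps)
  have "norm D \<le> real (card I) * eps * B / lam"
  proof (cases "norm D = 0")
    case True then show ?thesis using lam eps B by simp
  next
    case False
    then have "norm D > 0" by simp
    with fin2 have "lam * norm D \<le> real (card I) * eps * B"
      by (simp add: power2_eq_square)
    then show ?thesis using lam by (simp add: pos_le_divide_eq mult.commute)
  qed
  then show ?thesis by (simp add: D_def Ab_def)
qed



lemma grid_interval:
  assumes dt: "0 < dt" and a1: "t0 \<le> a" and a2: "a + \<rho> \<le> t0 + T" and rho: "0 \<le> \<rho>"
  shows "\<exists>Is \<subseteq> snap_idx T dt. card Is = nat \<lfloor>\<rho>/dt\<rfloor> \<and> (\<forall>i\<in>Is. a \<le> tgrid t0 dt i \<and> tgrid t0 dt i \<le> a + \<rho>)"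
proof -
  define lo where "lo = nat \<lceil>(a - t0)/dt\<rceil>"
  define L where "L = nat \<lfloor>\<rho>/dt\<rfloor>"
  define Is where "Is = (\<lambda>l. lo + l) ` {..<L}"
  have q0: "0 \<le> (a - t0)/dt" using a1 dt by (intro divide_nonneg_pos) auto
  have lo1: "(a - t0)/dt \<le> real lo"
  proof -
    have c1: "(a - t0)/dt \<le> of_int \<lceil>(a - t0)/dt\<rceil>" by (rule le_of_int_ceiling)
    have "0 \<le> \<lceil>(a - t0)/dt\<rceil>" using q0 by simp
    then have "real lo = of_int \<lceil>(a - t0)/dt\<rceil>" unfolding lo_def by simp
    then show ?thesis using c1 by simp
  qed
  have lo2: "real lo \<le> (a - t0)/dt + 1" unfolding lo_def using q0
    by (simp add: of_int_ceiling_le_add_one)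
  have L1: "real L \<le> \<rho>/dt" unfolding L_def using rho dt
    by (simp add: of_int_floor_le)
  have card: "card Is = L" unfolding Is_def by (simp add: card_image)
  have pts: "a \<le> tgrid t0 dt i \<and> tgrid t0 dt i \<le> a + \<rho>" if "i \<in> Is" for i
  proof -
    obtain l where l: "l < L" "i = lo + l" using \<open>i \<in> Is\<close> unfolding Is_def by auto
    have ll: "real l + 1 \<le> real L" using l(1) by linarith
    have "a - t0 \<le> real lo * dt" using lo1 dt by (simp add: divide_le_eq)
    moreover have "0 \<le> real l * dt" using dt by simp
    ultimately have A: "a \<le> tgrid t0 dt i" unfolding tgrid_def l(2) by (simp add: algebra_simps)
    have "real lo * dt \<le> ((a - t0)/dt + 1) * dt" using lo2 dt by (intro mult_right_mono) auto
    also have "\<dots> = (a - t0) + dt" using dt by (simp add: field_simps)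
    finally have "real lo * dt \<le> (a - t0) + dt" .
    moreover have "real l * dt + dt \<le> \<rho>"
    proof -
      have "(real l + 1) * dt \<le> real L * dt" using ll dt by (intro mult_right_mono) auto
      moreover have "real L * dt \<le> \<rho>" using L1 dt by (simp add: le_divide_eq)
      ultimately show ?thesis by (simp add: algebra_simps)
    qed
    ultimately have B: "tgrid t0 dt i \<le> a + \<rho>" unfolding tgrid_def l(2) by (simp add: algebra_simps)
    show ?thesis using A B by simp
  qed
  have sub: "Is \<subseteq> snap_idx T dt"
  proof
    fix i assume i: "i \<in> Is"
    have "t0 + real i * dt \<le> t0 + T" using pts[OF i] a2 unfolding tgrid_def by linarith
    then have "real i \<le> T / dt" using dt by (simp add: le_divide_eq)
    then have "int i \<le> \<lfloor>T/dt\<rfloor>" by (simp add: le_floor_iff)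
    then show "i \<in> snap_idx T dt" unfolding snap_idx_def by simp
  qed
  show ?thesis using sub card pts unfolding L_def by blast
qed

lemma sq_lower:
  fixes w :: "real^'n"
  assumes "norm (y - z) \<le> e"
  shows "(w \<bullet> y)^2 \<ge> (w \<bullet> z)^2 / 2 - (norm w)^2 * e^2"
proof -
  have "\<bar>w \<bullet> z - w \<bullet> y\<bar> \<le> norm w * norm (z - y)"
    unfolding inner_diff_right[symmetric] by (rule Cauchy_Schwarz_ineq2)
  also have "\<dots> \<le> norm w * e" using assms by (simp add: norm_minus_commute mult_left_mono)
  finally have "\<bar>w \<bullet> z - w \<bullet> y\<bar> \<le> norm w * e" .
  then have "\<bar>w \<bullet> z - w \<bullet> y\<bar>^2 \<le> (norm w * e)^2" by (rule power_mono) simp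
  then have h: "(w \<bullet> z - w \<bullet> y)^2 \<le> (norm w)^2 * e^2" by (simp add: power_mult_distrib)
  have "(w \<bullet> z)^2 \<le> 2 * (w \<bullet> y)^2 + 2 * (w \<bullet> z - w \<bullet> y)^2"
  proof -
    have "0 \<le> (w \<bullet> z - 2 * (w \<bullet> y))^2" by simp
    then show ?thesis by (simp add: power2_eq_square algebra_simps)
  qed
  then show ?thesis using h by simp
qed

lemma sampling:
  fixes x :: "real \<Rightarrow> real^'n" and t0 T :: real and S :: "real set"
  assumes T: "T > 0" and cont: "continuous_on {t0..t0+T} x"
    and Sfin: "finite S" and Ssub: "S \<subseteq> {t0..t0+T}"
    and Sspan: "\<And>w. (\<forall>s\<in>S. w \<bullet> x s = 0) \<Longrightarrow> w = 0"
  shows "\<exists>c>0. \<exists>\<delta>>0. \<forall>dt. 0 < dt \<and> dt < \<delta> \<longrightarrow> (\<forall>w. c * real (card (snap_idx T dt)) * (norm w)^2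
            \<le> (\<Sum>i\<in>snap_idx T dt. (w \<bullet> x (tgrid t0 dt i))^2))"
proof -
  define f where "f = (\<lambda>w::real^'n. \<Sum>s\<in>S. (w \<bullet> x s)^2)"
  have Sne: "S \<noteq> {}"
  proof
    assume "S = {}"
    then have "axis undefined (1::real) = (0::real^'n)" using Sspan by auto
    then show False by simp
  qed
  define K where "K = card S"
  have K: "K > 0" using Sfin Sne by (simp add: K_def card_gt_0_iff)
  have "\<exists>w0\<in>sphere (0::real^'n) 1. \<forall>w\<in>sphere 0 1. f w0 \<le> f w"
    by (rule continuous_attains_inf) (auto simp: f_def intro!: continuous_intros)
  then obtain w0 where w0: "norm w0 = 1" "\<And>w. norm w = 1 \<Longrightarrow> f w0 \<le> f w" by auto
  define c0 where "c0 = f w0"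
  have c0: "c0 > 0"
  proof -
    have "c0 \<ge> 0" unfolding c0_def f_def by (simp add: sum_nonneg)
    moreover have "c0 \<noteq> 0"
    proof
      assume "c0 = 0"
      then have "\<forall>s\<in>S. (w0 \<bullet> x s)^2 = 0" unfolding c0_def f_def using Sfin by (simp add: sum_nonneg_eq_0_iff)
      then have "w0 = 0" using Sspan by simp
      then show False using w0 by simp
    qed
    ultimately show ?thesis by simp
  qed
  have fb: "c0 * (norm w)^2 \<le> f w" for w
  proof (cases "w = 0")
    case True then show ?thesis by (simp add: f_def)
  next
    case False
    define u where "u = (1 / norm w) *\<^sub>R w"
    have "norm u = 1" using False by (simp add: u_def)
    then have "c0 \<le> f u" using w0 c0_def by simp
    also have "f u = f w / (norm w)^2"
      by (simp add: f_def u_def power_divide sum_divide_distrib)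
    finally show ?thesis using False by (simp add: le_divide_eq mult.commute)
  qed
  define \<eta> where "\<eta> = sqrt (c0 / (4 * K))"
  have \<eta>: "\<eta> > 0" using c0 K by (simp add: \<eta>_def)
  have \<eta>2: "\<eta>^2 = c0 / (4 * K)" using c0 K by (simp add: \<eta>_def)
  have "uniformly_continuous_on {t0..t0+T} x" using cont by (rule compact_uniformly_continuous) simp
  then obtain r where r: "r > 0" and rr: "\<And>t s. t \<in> {t0..t0+T} \<Longrightarrow> s \<in> {t0..t0+T} \<Longrightarrow> dist t s < r \<Longrightarrow> dist (x t) (x s) < \<eta>"
    unfolding uniformly_continuous_on_def using \<eta> by metis
  define \<rho> where "\<rho> = min r T / 2"
  have \<rho>: "\<rho> > 0" "\<rho> < r" "2 * \<rho> \<le> T" using r T by (auto simp: \<rho>_def)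
  define c where "c = c0 * \<rho> / (16 * K * T)"
  have c: "c > 0" using c0 \<rho> K T by (simp add: c_def)
  have main: "c * real (card (snap_idx T dt)) * (norm w)^2 \<le> (\<Sum>i\<in>snap_idx T dt. (w \<bullet> x (tgrid t0 dt i))^2)"
    if dt: "0 < dt" "dt < \<rho>/2" for dt w
  proof -
    define I where "I = snap_idx T dt"
    define L where "L = nat \<lfloor>\<rho>/dt\<rfloor>"
    define P where "P = (\<Sum>i\<in>I. (w \<bullet> x (tgrid t0 dt i))^2)"
    define W where "W = (norm w)^2"
    have finI: "finite I" by (simp add: I_def snap_idx_def)
    have each: "real L * ((w \<bullet> x s)^2/2 - W * \<eta>^2) \<le> P" if s: "s \<in> S" for s
    proof -
      have sI: "s \<in> {t0..t0+T}" using s Ssub by auto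
      obtain a where a: "t0 \<le> a" "a + \<rho> \<le> t0 + T" "s - \<rho> \<le> a" "a \<le> s"
      proof (cases "s + \<rho> \<le> t0 + T")
        case True then show ?thesis using that[of s] sI \<rho> by auto
      next
        case False then show ?thesis using that[of "s - \<rho>"] sI \<rho> by auto
      qed
      obtain Is where Is: "Is \<subseteq> I" "card Is = L"
          "\<forall>i\<in>Is. a \<le> tgrid t0 dt i \<and> tgrid t0 dt i \<le> a + \<rho>"
        using grid_interval[OF dt(1) a(1) a(2)] \<rho> unfolding I_def L_def by auto
      have tb: "(w \<bullet> x s)^2/2 - W * \<eta>^2 \<le> (w \<bullet> x (tgrid t0 dt i))^2" if i: "i \<in> Is" for i
      proof -
        define t where "t = tgrid t0 dt i"
        have tI: "t \<in> {t0..t0+T}" using Is(3) i a unfolding t_def by force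
        have "dist t s < r" using Is(3) i a \<rho> unfolding t_def dist_real_def by force
        then have "dist (x t) (x s) < \<eta>" using rr[OF tI sI] by simp
        then have "norm (x t - x s) \<le> \<eta>" by (simp add: dist_norm)
        from sq_lower[OF this, of w] show ?thesis unfolding t_def W_def by simp
      qed
      have "real L * ((w \<bullet> x s)^2/2 - W * \<eta>^2) = (\<Sum>i\<in>Is. (w \<bullet> x s)^2/2 - W * \<eta>^2)"
        using Is(2) by simp
      also have "\<dots> \<le> (\<Sum>i\<in>Is. (w \<bullet> x (tgrid t0 dt i))^2)" using tb by (rule sum_mono)
      also have "\<dots> \<le> P" unfolding P_def using Is(1) finI by (intro sum_mono2) auto
      finally show ?thesis .
    qed
    have "(\<Sum>s\<in>S. real L * ((w \<bullet> x s)^2/2 - W * \<eta>^2)) \<le> (\<Sum>s\<in>S. P)"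
      using each by (rule sum_mono)
    also have "(\<Sum>s\<in>S. P) = real K * P" by (simp add: K_def)
    also have "(\<Sum>s\<in>S. real L * ((w \<bullet> x s)^2/2 - W * \<eta>^2)) = real L * (f w / 2 - real K * W * \<eta>^2)"
      by (simp add: f_def sum_subtractf sum_distrib_left sum_divide_distrib K_def algebra_simps)
    finally have H0: "real L * (f w / 2 - real K * W * \<eta>^2) \<le> real K * P" .
    have KW: "real K * W * \<eta>^2 = c0 * W / 4" using K unfolding \<eta>2 by (simp add: field_simps)
    have fw: "c0 * W \<le> f w" using fb unfolding W_def .
    have W0: "W \<ge> 0" unfolding W_def by simp
    have "real L * (c0 * W / 4) \<le> real L * (f w / 2 - real K * W * \<eta>^2)"
      unfolding KW using fw c0 W0 by (intro mult_left_mono) (auto simp: mult.commute)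
    with H0 have H1: "real L * (c0 * W / 4) \<le> real K * P" by linarith
    have cardI: "real (card I) \<le> 2 * T / dt"
    proof -
      have "card I = nat \<lfloor>T/dt\<rfloor> + 1" by (simp add: I_def snap_idx_def)
      moreover have "0 \<le> \<lfloor>T/dt\<rfloor>" using T dt by simp
      ultimately have "real (card I) = of_int \<lfloor>T/dt\<rfloor> + 1" by simp
      also have "\<dots> \<le> T/dt + 1" by simp
      also have "1 \<le> T / dt" using dt \<rho> by (simp add: le_divide_eq)
      then have "T/dt + 1 \<le> 2 * T / dt" by simp
      finally show ?thesis .
    qed
    have Lb: "\<rho> / (2 * dt) \<le> real L"
    proof -
      have "0 \<le> \<lfloor>\<rho>/dt\<rfloor>" using \<rho> dt by simp
      then have "real L = of_int \<lfloor>\<rho>/dt\<rfloor>" unfolding L_def by simp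
      moreover have "\<rho>/dt - 1 \<le> of_int \<lfloor>\<rho>/dt\<rfloor>" by linarith
      moreover have "\<rho>/(2*dt) \<le> \<rho>/dt - 1"
      proof -
        have "2 \<le> \<rho>/dt" using dt by (simp add: le_divide_eq)
        moreover have "\<rho>/(2*dt) = (\<rho>/dt)/2" by simp
        ultimately show ?thesis by linarith
      qed
      ultimately show ?thesis by linarith
    qed
    have "c * real (card I) \<le> c * (2 * T / dt)" using cardI c by (intro mult_left_mono) auto
    also have "c * (2 * T / dt) = (c0 / (4 * K)) * (\<rho> / (2 * dt))"
      unfolding c_def using T dt K by (simp add: field_simps)
    also have "\<dots> \<le> (c0 / (4 * K)) * real L" using Lb c0 K by (intro mult_left_mono) auto
    finally have "c * real (card I) * W \<le> (c0 / (4 * K)) * real L * W" using W0 by (intro mult_right_mono) auto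
    also have "(c0 / (4 * K)) * real L * W = (real L * (c0 * W / 4)) / real K" using K by (simp add: field_simps)
    also have "\<dots> \<le> (real K * P) / real K" using H1 K by (intro divide_right_mono) auto
    also have "\<dots> = P" using K by simp
    finally show ?thesis unfolding I_def P_def W_def .
  qed
  show ?thesis
    apply (rule exI[of _ c])
    apply (intro conjI c)
    apply (rule exI[of _ "\<rho>/2"])
    using \<rho> main by auto
qed



lemma sum_UNIV_plus: "(\<Sum>k\<in>(UNIV::('a::finite+'b::finite) set). h k) = (\<Sum>a\<in>UNIV. h (Inl a)) + (\<Sum>b\<in>UNIV. h (Inr b))"
proof -
  have u: "(UNIV::('a+'b) set) = UNIV <+> UNIV" by simp
  show ?thesis unfolding u by (subst sum.Plus) (simp_all add: comp_def)
qed

lemma Jmat_orth1: "transpose (Jmat::real^('m::finite+'m)^('m+'m)) ** Jmat = mat 1"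
  unfolding vec_eq_iff
proof (intro allI)
  fix i j :: "'m + 'm"
  show "(transpose Jmat ** Jmat) $ i $ j = (mat 1 :: real^('m+'m)^('m+'m)) $ i $ j"
    by (cases i; cases j) (simp_all add: matrix_matrix_mult_def transpose_def Jmat_def mat_def sum_UNIV_plus if_distrib if_distribR cong: if_cong)
qed

lemma Jmat_orth2: "(Jmat::real^('m::finite+'m)^('m+'m)) ** transpose Jmat = mat 1"
  using Jmat_orth1 matrix_left_right_inverse by blast

lemma vecm_add: "vecm (P + Q) = vecm P + vecm (Q::real^'c^'r)"
  by (simp add: vec_eq_iff vecm_def)

lemma gram_sym: "transpose (opinf_gram U x I) = opinf_gram U x I"
  by (simp only: opinf_gram_def transpose_sum transpose_outer)

lemma grid_in: "0 < T \<Longrightarrow> 0 < dt \<Longrightarrow> i \<in> snap_idx T dt \<Longrightarrow> tgrid t0 dt i \<in> {t0..t0+T}"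
proof -
  assume T: "0 < T" and dt: "0 < dt" and i: "i \<in> snap_idx T dt"
  have f0: "0 \<le> \<lfloor>T/dt\<rfloor>" using T dt by simp
  have "i \<le> nat \<lfloor>T/dt\<rfloor>" using i by (simp add: snap_idx_def)
  then have "int i \<le> \<lfloor>T/dt\<rfloor>" using f0 by (simp add: le_nat_iff)
  then have "real i \<le> T/dt" by (simp add: le_floor_iff)
  then have "real i * dt \<le> T" using dt by (simp add: le_divide_eq)
  moreover have "0 \<le> real i * dt" using dt by simp
  ultimately show ?thesis by (simp add: tgrid_def)
qed

lemma solve_eq:
  fixes G Ah R :: "real^'n^'n"
  assumes "(kron (mat 1) G + kron G (mat 1)) *v vecm Ah = vecm R" and "transpose G = G"
  shows "G ** Ah + Ah ** G = R"
proof -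
  have "vecm (G ** Ah + Ah ** G) = vecm R"
    using assms by (simp only: matrix_vector_mult_add_rdistrib kron_id_left kron_id_right vecm_add)
  then show ?thesis by (rule vecm_inj)
qed

theorem theorem3:
  fixes A :: "real^('M::finite + 'M)^('M + 'M)"
    and f :: "real^('M + 'M) \<Rightarrow> real"
    and gradf :: "real^('M + 'M) \<Rightarrow> real^('M + 'M)"
    and x :: "real \<Rightarrow> real^('M + 'M)"
    and t0 T :: real
    and xt :: "real \<Rightarrow> nat \<Rightarrow> real^('M + 'M)"
    and Ubar :: "real \<Rightarrow> real^'M^'M"
    and Ahat :: "real \<Rightarrow> real^('M + 'M)^('M + 'M)"
  assumes A_sym: "transpose A = A"
    and f_grad: "\<forall>y. (f has_derivative (\<lambda>h. gradf y \<bullet> h)) (at y)"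
    and ode: "\<forall>t. (x has_vector_derivative (Jmat *v (A *v x t + gradf (x t)))) (at t)"
    and T_pos: "T > 0"
    and pod: "\<forall>dt>0. cotangent_lift_full (Ubar dt)
                 (snapYYt (\<lambda>i. x (tgrid t0 dt i)) (snap_idx T dt))"
    and basis_complete: "\<forall>dt>0. \<forall>y. norm ((mat 1 - blockdiag (Ubar dt) ** transpose (blockdiag (Ubar dt))) *v y) = 0"
    and deriv_approx: "((\<lambda>dt. Max ((\<lambda>i. norm (xt dt i - vector_derivative x (at (tgrid t0 dt i))))
                              ` snap_idx T dt)) \<longlongrightarrow> 0) (at_right 0)"
    and rank_X: "\<forall>dt>0. dim (span ((\<lambda>i. x (tgrid t0 dt i)) ` snap_idx T dt))
                   = min CARD('M + 'M) (card (snap_idx T dt))"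
    and rank_gradH: "\<forall>dt>0. dim (span ((\<lambda>i. A *v x (tgrid t0 dt i) + gradf (x (tgrid t0 dt i))) ` snap_idx T dt))
                   = min CARD('M + 'M) (card (snap_idx T dt))"
    and Ahat_sol: "\<forall>dt>0.
        (kron (mat 1) (opinf_gram (blockdiag (Ubar dt)) (\<lambda>i. x (tgrid t0 dt i)) (snap_idx T dt))
         + kron (opinf_gram (blockdiag (Ubar dt)) (\<lambda>i. x (tgrid t0 dt i)) (snap_idx T dt)) (mat 1))
        *v vecm (Ahat dt)
        = vecm (opinf_rhs (blockdiag (Ubar dt)) Jmat (\<lambda>i. x (tgrid t0 dt i)) (xt dt)
                 (\<lambda>i. gradf (x (tgrid t0 dt i))) (snap_idx T dt))"
  shows "((\<lambda>dt. Ahat dt - transpose (blockdiag (Ubar dt)) ** A ** blockdiag (Ubar dt)) \<longlongrightarrow> 0) (at_right 0)"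
proof -
  let ?N = "CARD('M + 'M)"
  have J1: "transpose Jmat ** (Jmat::real^('M+'M)^('M+'M)) = mat 1" by (rule Jmat_orth1)
  have J2: "(Jmat::real^('M+'M)^('M+'M)) ** transpose Jmat = mat 1" by (rule Jmat_orth2)
  have cont_at: "continuous (at t) x" for t
    using ode has_vector_derivative_continuous by blast
  have cont: "continuous_on {t0..t0+T} x"
    by (intro continuous_at_imp_continuous_on ballI cont_at)
  have "compact (x ` {t0..t0+T})" by (intro compact_continuous_image cont compact_Icc)
  then have "bounded (x ` {t0..t0+T})" by (rule compact_imp_bounded)
  then obtain B where B: "B > 0" "\<And>t. t \<in> {t0..t0+T} \<Longrightarrow> norm (x t) \<le> B"
    unfolding bounded_pos by auto
  define dt1 where "dt1 = T / real ?N"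
  have dt1: "dt1 > 0" using T_pos by (simp add: dt1_def)
  define S where "S = tgrid t0 dt1 ` snap_idx T dt1"
  have cardS1: "card (snap_idx T dt1) = ?N + 1"
  proof -
    have h: "T / dt1 = real ?N" using T_pos by (simp add: dt1_def)
    have "\<lfloor>T / dt1\<rfloor> = int ?N" by (simp only: h floor_of_nat)
    then show ?thesis by (simp add: snap_idx_def)
  qed
  have dimS: "dim (span (x ` S)) = ?N"
    using rank_X dt1 cardS1 unfolding S_def by (simp add: image_image)
  have spanS: "span (x ` S) = UNIV"
  proof -
    have "dim (x ` S) = DIM(real^('M+'M))" using dimS by (simp add: dim_span)
    then show ?thesis by (simp only: dim_eq_full)
  qed
  have Sspan: "w = 0" if "\<forall>s\<in>S. w \<bullet> x s = 0" for w :: "real^('M+'M)"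
  proof -
    have "orthogonal w w"
      by (rule orthogonal_to_span[of w "x ` S"]) (use spanS that in \<open>auto simp: orthogonal_def\<close>)
    then show ?thesis by (simp add: orthogonal_def)
  qed
  have Sfin: "finite S" by (simp add: S_def snap_idx_def)
  have Ssub: "S \<subseteq> {t0..t0+T}" using grid_in[OF T_pos dt1] unfolding S_def by auto
  obtain c \<delta> where c: "c > 0" and \<delta>: "\<delta> > 0" and samp: "\<And>dt w. 0 < dt \<Longrightarrow> dt < \<delta> \<Longrightarrow>
      c * real (card (snap_idx T dt)) * (norm w)^2 \<le> (\<Sum>i\<in>snap_idx T dt. (w \<bullet> x (tgrid t0 dt i))^2)"
    using sampling[OF T_pos cont Sfin Ssub Sspan] by blast
  define Mx where "Mx = (\<lambda>dt. Max ((\<lambda>i. norm (xt dt i - vector_derivative x (at (tgrid t0 dt i)))) ` snap_idx T dt))"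
  have bound: "norm (Ahat dt - transpose (blockdiag (Ubar dt)) ** A ** blockdiag (Ubar dt)) \<le> Mx dt * (B / c)"
    if dt: "0 < dt" "dt < \<delta>" for dt
  proof -
    define U where "U = blockdiag (Ubar dt)"
    define I where "I = snap_idx T dt"
    have finI: "finite I" by (simp add: I_def snap_idx_def)
    have I0: "0 \<in> I" by (simp add: I_def snap_idx_def)
    have cardI: "card I > 0" using finI I0 by (auto simp: card_gt_0_iff)
    have U2: "U ** transpose U = mat 1"
    proof -
      have "(mat 1 - U ** transpose U) *v y = 0" for y
        using basis_complete dt(1) unfolding U_def by auto
      then have "mat 1 *v y = (U ** transpose U) *v y" for y
        by (simp add: matrix_vector_mult_diff_rdistrib)
      then show ?thesis by (simp only: matrix_eq[of "U ** transpose U"]) simp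
    qed
    have U1: "transpose U ** U = mat 1" using U2 matrix_left_right_inverse by blast
    have eq: "opinf_gram U (\<lambda>i. x (tgrid t0 dt i)) I ** Ahat dt + Ahat dt ** opinf_gram U (\<lambda>i. x (tgrid t0 dt i)) I
        = opinf_rhs U Jmat (\<lambda>i. x (tgrid t0 dt i)) (xt dt) (\<lambda>i. gradf (x (tgrid t0 dt i))) I"
      by (rule solve_eq) (use Ahat_sol dt(1) gram_sym in \<open>simp_all add: U_def I_def\<close>)
    have vd: "vector_derivative x (at t) = Jmat *v (A *v x t + gradf (x t))" for t
      using ode vector_derivative_at by blast
    have err: "\<forall>i\<in>I. norm (xt dt i - Jmat *v (A *v x (tgrid t0 dt i) + gradf (x (tgrid t0 dt i)))) \<le> Mx dt"
      unfolding Mx_def I_def[symmetric] vd[symmetric] using finI by (intro ballI Max_ge) auto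
    have eps: "0 \<le> Mx dt" using err I0 by (meson norm_ge_zero order_trans)
    have bnd: "\<forall>i\<in>I. norm (x (tgrid t0 dt i)) \<le> B" using B(2) grid_in[OF T_pos dt(1)] unfolding I_def by blast
    have pos: "\<forall>w. (c * real (card I)) * (norm w)^2 \<le> (\<Sum>i\<in>I. (w \<bullet> x (tgrid t0 dt i))^2)"
      using samp[OF dt] unfolding I_def by blast
    have lam: "c * real (card I) > 0" using c cardI by simp
    have "norm (Ahat dt - transpose U ** A ** U) \<le> real (card I) * Mx dt * B / (c * real (card I))"
      by (rule lyap_bound[OF U1 U2 J1 J2 A_sym finI eq err bnd pos lam eps]) (use B in simp)
    also have "\<dots> = Mx dt * (B / c)" using cardI c by (simp add: field_simps)
    finally show ?thesis unfolding U_def .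
  qed
  have ev: "eventually (\<lambda>dt. norm (Ahat dt - transpose (blockdiag (Ubar dt)) ** A ** blockdiag (Ubar dt)) \<le> Mx dt * (B / c)) (at_right 0)"
    unfolding eventually_at_right_field using \<delta> bound by blast
  have lim: "((\<lambda>dt. Mx dt * (B / c)) \<longlongrightarrow> 0) (at_right 0)"
    using deriv_approx unfolding Mx_def by (intro tendsto_mult_left_zero)
  show ?thesis by (rule Lim_null_comparison[OF ev lim])
qed

end
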